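(* Let $C=p_r\dots p_s$ be a configuration of g-2PATH satisfying the condition of noninterference of extensions (CNI). Then (1) if $(i,j)\in K$ and $i+1\le 0$, then $V(i,j)=V(i+1,j)$; and (2) if $(i,j)\in K$ and $0\le j-1$, then $U(i,j)=U(i,j-1)$.
   Context: Positions are elements of $\mathbb{Z}^2$; with $\epsilon_0=(1,0),\epsilon_1=(0,1),\epsilon_2=(-1,0),\epsilon_3=(0,-1)$, positions $p,p'$ are adjacent if $p'-p$ is some $\epsilon_i$. A configuration of g-2PATH is a sequence $C=p_r\dots p_s$ ($r\le0\le s$) of positions with $p_0=(0,0)$, consecutive positions adjacent, all positions distinct, and $p_l,p_m$ not adjacent whenever $|l-m|\ge2$. For $p\in C$, $\mathrm{bc}_C(p)=(b_0,\dots,b_3)$ with $b_i=1$ iff $p+\epsilon_i\in C$. For fixed $C$ and $r\le i\le0\le j\le s$: $W(i,j)$ is the set of pairs $(x_0,x_1)$ of finite, possibly empty, sequences of positions such that $x_0p_i\dots p_jx_1$ is a configuration $C'$ of g-2PATH (with general at $p_0$) with $\mathrm{bc}_{C'}(p_l)=\mathrm{bc}_C(p_l)$ for all $i\le l\le j$; $U(i,j)$ and $V(i,j)$ are the sets of first, respectively second, components of elements of $W(i,j)$. $\mathrm{NI}(i,j)$ is the statement $W(i,j)=U(i,j)\times V(i,j)$. Define $I=\{(i,j): r\le i-1,\ W(i,j)\text{ infinite},\ W(i-1,j)\text{ finite}\}$, $J=\{(i,j): j+1\le s,\ W(i,j)\text{ infinite},\ W(i,j+1)\text{ finite}\}$,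 $K=\{(i,j): W(i,j)\text{ finite}\}$ (all with $r\le i\le0\le j\le s$). $C$ satisfies CNI if $\mathrm{NI}(i,j)$ holds for every $(i,j)\in I\cup J\cup K$. *)

theory Defs
  imports Main
begin

type_synonym pos = "int \<times> int"

definition eps :: "nat \<Rightarrow> pos" where
  "eps k = (if k = 0 then (1,0) else if k = 1 then (0,1) else if k = 2 then (-1,0) else (0,-1))"

definition padd :: "pos \<Rightarrow> pos \<Rightarrow> pos" where
  "padd a b = (fst a + fst b, snd a + snd b)"

definition adjacent :: "pos \<Rightarrow> pos \<Rightarrow> bool" where
  "adjacent p q \<longleftrightarrow> (\<exists>k<4. q = padd p (eps k))"

definition is_config :: "int \<Rightarrow> int \<Rightarrow> (int \<Rightarrow> pos) \<Rightarrow> bool" where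
  "is_config r s p \<longleftrightarrow>
     r \<le> 0 \<and> 0 \<le> s \<and> p 0 = (0,0) \<and>
     (\<forall>l. r \<le> l \<and> l < s \<longrightarrow> adjacent (p l) (p (l+1))) \<and>
     inj_on p {r..s} \<and>
     (\<forall>l m. l \<in> {r..s} \<and> m \<in> {r..s} \<and> \<bar>l - m\<bar> \<ge> 2 \<longrightarrow> \<not> adjacent (p l) (p m))"

definition bc :: "pos set \<Rightarrow> pos \<Rightarrow> bool list" where
  "bc S q = map (\<lambda>k. padd q (eps k) \<in> S) [0,1,2,3]"

text \<open>The sequence x0 p_i ... p_j x1, indexed so that p_l keeps index l.\<close>
definition ext_seq :: "(int \<Rightarrow> pos) \<Rightarrow> int \<Rightarrow> int \<Rightarrow> pos list \<Rightarrow> pos list \<Rightarrow> int \<Rightarrow> pos" where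
  "ext_seq p i j x0 x1 l =
     (if l < i then x0 ! nat (l - (i - int (length x0)))
      else if l \<le> j then p l
      else x1 ! nat (l - j - 1))"

definition Wset :: "int \<Rightarrow> int \<Rightarrow> (int \<Rightarrow> pos) \<Rightarrow> int \<Rightarrow> int \<Rightarrow> (pos list \<times> pos list) set" where
  "Wset r s p i j = {(x0, x1).
     let r' = i - int (length x0); s' = j + int (length x1); p' = ext_seq p i j x0 x1 in
     is_config r' s' p' \<and>
     (\<forall>l \<in> {i..j}. bc (p' ` {r'..s'}) (p l) = bc (p ` {r..s}) (p l))}"

definition Uset :: "int \<Rightarrow> int \<Rightarrow> (int \<Rightarrow> pos) \<Rightarrow> int \<Rightarrow> int \<Rightarrow> pos list set" where
  "Uset r s p i j = fst ` Wset r s p i j"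

definition Vset :: "int \<Rightarrow> int \<Rightarrow> (int \<Rightarrow> pos) \<Rightarrow> int \<Rightarrow> int \<Rightarrow> pos list set" where
  "Vset r s p i j = snd ` Wset r s p i j"

definition NI :: "int \<Rightarrow> int \<Rightarrow> (int \<Rightarrow> pos) \<Rightarrow> int \<Rightarrow> int \<Rightarrow> bool" where
  "NI r s p i j \<longleftrightarrow> Wset r s p i j = Uset r s p i j \<times> Vset r s p i j"

definition Iset :: "int \<Rightarrow> int \<Rightarrow> (int \<Rightarrow> pos) \<Rightarrow> (int \<times> int) set" where
  "Iset r s p = {(i,j). r \<le> i \<and> i \<le> 0 \<and> 0 \<le> j \<and> j \<le> s \<and> r \<le> i - 1 \<and>
      infinite (Wset r s p i j) \<and> finite (Wset r s p (i - 1) j)}"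

definition Jset :: "int \<Rightarrow> int \<Rightarrow> (int \<Rightarrow> pos) \<Rightarrow> (int \<times> int) set" where
  "Jset r s p = {(i,j). r \<le> i \<and> i \<le> 0 \<and> 0 \<le> j \<and> j \<le> s \<and> j + 1 \<le> s \<and>
      infinite (Wset r s p i j) \<and> finite (Wset r s p i (j + 1))}"

definition Kset :: "int \<Rightarrow> int \<Rightarrow> (int \<Rightarrow> pos) \<Rightarrow> (int \<times> int) set" where
  "Kset r s p = {(i,j). r \<le> i \<and> i \<le> 0 \<and> 0 \<le> j \<and> j \<le> s \<and> finite (Wset r s p i j)}"

definition CNI :: "int \<Rightarrow> int \<Rightarrow> (int \<Rightarrow> pos) \<Rightarrow> bool" where
  "CNI r s p \<longleftrightarrow> (\<forall>(i,j) \<in> Iset r s p \<union> Jset r s p \<union> Kset r s p. NI r s p i j)"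

end

theory Submission imports Defs begin

lemma Wset_iff:
  "(x0,x1) \<in> Wset r s p i j \<longleftrightarrow>
     is_config (i - int (length x0)) (j + int (length x1)) (ext_seq p i j x0 x1) \<and>
     (\<forall>l \<in> {i..j}. bc (ext_seq p i j x0 x1 ` {i - int (length x0)..j + int (length x1)}) (p l) = bc (p ` {r..s}) (p l))"
  unfolding Wset_def by (simp add: Let_def)

lemma config_cong:
  assumes "is_config r s p" "\<And>l. r \<le> l \<Longrightarrow> l \<le> s \<Longrightarrow> q l = p l"
  shows "is_config r s q"
proof -
  have e: "\<forall>l\<in>{r..s}. q l = p l" using assms(2) by auto
  have "inj_on q {r..s}" using assms(1) e unfolding is_config_def inj_on_def by auto
  moreover have "q 0 = (0,0)" using assms unfolding is_config_def by auto
  moreover have "\<forall>l. r \<le> l \<and> l < s \<longrightarrow> adjacent (q l) (q (l+1))"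
    using assms unfolding is_config_def by auto
  moreover have "\<forall>l m. l \<in> {r..s} \<and> m \<in> {r..s} \<and> \<bar>l - m\<bar> \<ge> 2 \<longrightarrow> \<not> adjacent (q l) (q m)"
    using assms(1) e unfolding is_config_def by auto
  ultimately show ?thesis using assms(1) unfolding is_config_def by auto
qed

lemma image_cong': "(\<And>l. r \<le> l \<Longrightarrow> l \<le> s \<Longrightarrow> q l = p l) \<Longrightarrow> q ` {r..s} = p ` {r..s}"
  by (rule image_cong) auto

lemma eps_nz: "k < 4 \<Longrightarrow> padd x (eps k) \<noteq> x"
  by (auto simp: padd_def eps_def prod_eq_iff)

lemma nbr:
  assumes "is_config r s p" "r \<le> l" "l \<le> s" "k < 4"
  shows "padd (p l) (eps k) \<in> p ` {r..s} \<longleftrightarrow> (\<exists>m\<in>{r..s}. \<bar>m - l\<bar> = 1 \<and> p m = padd (p l) (eps k))"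
proof
  assume "padd (p l) (eps k) \<in> p ` {r..s}"
  then obtain m where m: "m \<in> {r..s}" "p m = padd (p l) (eps k)" by auto
  have "m \<noteq> l" using m eps_nz[OF assms(4), of "p l"] by metis
  moreover have "adjacent (p l) (p m)" using m assms(4) unfolding adjacent_def by auto
  hence "\<not> \<bar>l - m\<bar> \<ge> 2" using assms m unfolding is_config_def by (metis atLeastAtMost_iff)
  ultimately have "\<bar>m - l\<bar> = 1" by auto
  thus "\<exists>m\<in>{r..s}. \<bar>m - l\<bar> = 1 \<and> p m = padd (p l) (eps k)" using m by auto
qed (auto intro: image_eqI[OF sym])

lemma bc_local:
  assumes "is_config r s p" "is_config r' s' q" "r \<le> l" "l \<le> s" "r' \<le> l" "l \<le> s'" "q l = p l"
    and H: "\<And>m. \<bar>m - l\<bar> = 1 \<Longrightarrow> (m \<in> {r..s} \<longleftrightarrow> m \<in> {r'..s'}) \<and> (m \<in> {r..s} \<longrightarrow> q m = p m)"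
  shows "bc (q ` {r'..s'}) (p l) = bc (p ` {r..s}) (p l)"
proof -
  have "padd (p l) (eps k) \<in> q ` {r'..s'} \<longleftrightarrow> padd (p l) (eps k) \<in> p ` {r..s}" if k: "k < 4" for k
  proof -
    have "padd (p l) (eps k) \<in> q ` {r'..s'} \<longleftrightarrow> (\<exists>m\<in>{r'..s'}. \<bar>m - l\<bar> = 1 \<and> q m = padd (q l) (eps k))"
      using nbr[OF assms(2) assms(5,6) k] assms(7) by simp
    also have "\<dots> \<longleftrightarrow> (\<exists>m\<in>{r..s}. \<bar>m - l\<bar> = 1 \<and> p m = padd (p l) (eps k))"
      using H assms(7) by metis
    also have "\<dots> \<longleftrightarrow> padd (p l) (eps k) \<in> p ` {r..s}"
      using nbr[OF assms(1) assms(3,4) k] by simp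
    finally show ?thesis .
  qed
  thus ?thesis unfolding bc_def by simp
qed

lemma ext_prefix:
  assumes "r \<le> i" "i \<le> j" "r \<le> l" "l \<le> j"
  shows "ext_seq p i j (map p [r..i-1]) x1 l = p l"
  using assms by (auto simp: ext_seq_def)

lemma ext_suffix:
  assumes "j \<le> s" "i \<le> j" "i \<le> l" "l \<le> s"
  shows "ext_seq p i j x0 (map p [j+1..s]) l = p l"
  using assms by (auto simp: ext_seq_def)

lemma len_pre: "r \<le> i \<Longrightarrow> i - int (length (map p [r..i-1])) = r" by simp
lemma len_suf: "j \<le> s \<Longrightarrow> j + int (length (map p [j+1..s])) = s" by simp

lemma ext_A: "i \<le> j \<Longrightarrow> i - int (length x0) \<le> l \<Longrightarrow>
  ext_seq p (i+1) j (x0 @ [p i]) x1 l = ext_seq p i j x0 x1 l"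
  by (auto simp: ext_seq_def nth_append nat_diff_distrib)

lemma ext_B: "i \<le> j \<Longrightarrow> ext_seq p i (j-1) x0 (p j # x1) l = ext_seq p i j x0 x1 l"
proof -
  assume "i \<le> j"
  moreover have "l > j \<Longrightarrow> nat (l - (j - 1) - 1) = Suc (nat (l - j - 1))" by simp
  ultimately show ?thesis by (auto simp: ext_seq_def)
qed

lemma lemA:
  assumes "(x0,x1) \<in> Wset r s p i j" "i + 1 \<le> j"
  shows "(x0 @ [p i], x1) \<in> Wset r s p (i+1) j"
proof -
  let ?q = "ext_seq p i j x0 x1" and ?q' = "ext_seq p (i+1) j (x0 @ [p i]) x1"
  have r: "i + 1 - int (length (x0 @ [p i])) = i - int (length x0)" by simp
  have e: "\<And>l. i - int (length x0) \<le> l \<Longrightarrow> l \<le> j + int (length x1) \<Longrightarrow> ?q' l = ?q l"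
    using ext_A assms(2) by simp
  have im: "?q' ` {i - int (length x0)..j + int (length x1)} = ?q ` {i - int (length x0)..j + int (length x1)}"
    by (rule image_cong'[OF e])
  show ?thesis using assms(1) unfolding Wset_iff r im
    using config_cong[of _ _ ?q ?q', OF _ e] by auto
qed

lemma lemB:
  assumes "(x0,x1) \<in> Wset r s p i j" "i \<le> j - 1"
  shows "(x0, p j # x1) \<in> Wset r s p i (j - 1)"
proof -
  have r: "j - 1 + int (length (p j # x1)) = j + int (length x1)" by simp
  have e: "ext_seq p i (j-1) x0 (p j # x1) = ext_seq p i j x0 x1"
    using ext_B assms(2) by (intro ext) simp
  show ?thesis using assms(1) unfolding Wset_iff r e by auto
qed

lemma lemC:
  assumes "is_config r s p" "r \<le> i" "i \<le> j" "j \<le> s"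
  shows "(map p [r..i-1], map p [j+1..s]) \<in> Wset r s p i j"
proof -
  have e: "\<And>l. r \<le> l \<Longrightarrow> l \<le> s \<Longrightarrow> ext_seq p i j (map p [r..i-1]) (map p [j+1..s]) l = p l"
  proof -
    fix l assume "r \<le> l" "l \<le> s"
    thus "ext_seq p i j (map p [r..i-1]) (map p [j+1..s]) l = p l"
      using ext_prefix[of r i j l p] ext_suffix[of j s i l p] assms by (cases "l \<le> j") auto
  qed
  have im: "ext_seq p i j (map p [r..i-1]) (map p [j+1..s]) ` {r..s} = p ` {r..s}"
    by (rule image_cong'[OF e])
  show ?thesis unfolding Wset_iff len_pre[OF assms(2)] len_suf[OF assms(4)]
    using config_cong[OF assms(1) e] im by auto
qed

lemma lemD:
  assumes "is_config r s p" "r \<le> i" "i + 1 \<le> j" "j \<le> s"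
    and "(map p [r..i-1] @ [p i], x1) \<in> Wset r s p (i+1) j"
  shows "(map p [r..i-1], x1) \<in> Wset r s p i j"
proof -
  let ?x0 = "map p [r..i-1]"
  let ?q = "ext_seq p i j ?x0 x1" and ?q' = "ext_seq p (i+1) j (?x0 @ [p i]) x1"
  have r: "i + 1 - int (length (?x0 @ [p i])) = r" and r0: "i - int (length ?x0) = r"
    using assms(2) by simp_all
  have e: "\<And>l. r \<le> l \<Longrightarrow> l \<le> j + int (length x1) \<Longrightarrow> ?q' l = ?q l"
    using ext_A[of i j ?x0] assms by simp
  have im: "?q' ` {r..j + int (length x1)} = ?q ` {r..j + int (length x1)}"
    by (rule image_cong'[OF e])
  have c': "is_config r (j + int (length x1)) ?q'" and
    b': "\<forall>l\<in>{i+1..j}. bc (?q' ` {r..j + int (length x1)}) (p l) = bc (p ` {r..s}) (p l)"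
    using assms(5) unfolding Wset_iff r by auto
  have c: "is_config r (j + int (length x1)) ?q" using config_cong[OF c', of ?q] e by simp
  have qp: "\<And>l. r \<le> l \<Longrightarrow> l \<le> j \<Longrightarrow> ?q l = p l" using ext_prefix assms(2,3) by simp
  have bi: "bc (?q ` {r..j + int (length x1)}) (p i) = bc (p ` {r..s}) (p i)"
  proof (rule bc_local[OF assms(1) c])
    fix m :: int assume "\<bar>m - i\<bar> = 1"
    thus "(m \<in> {r..s}) = (m \<in> {r..j + int (length x1)}) \<and> (m \<in> {r..s} \<longrightarrow> ?q m = p m)"
      using qp assms by auto
  qed (use assms qp in auto)
  have "\<forall>l\<in>{i..j}. bc (?q ` {r..j + int (length x1)}) (p l) = bc (p ` {r..s}) (p l)"
  proof
    fix l assume "l \<in> {i..j}"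
    thus "bc (?q ` {r..j + int (length x1)}) (p l) = bc (p ` {r..s}) (p l)"
      using bi b' im by (cases "l = i") auto
  qed
  thus ?thesis unfolding Wset_iff r0 using c by auto
qed

lemma lemD':
  assumes "is_config r s p" "r \<le> i" "i \<le> j - 1" "j \<le> s"
    and "(x0, p j # map p [j+1..s]) \<in> Wset r s p i (j - 1)"
  shows "(x0, map p [j+1..s]) \<in> Wset r s p i j"
proof -
  let ?x1 = "map p [j+1..s]"
  let ?q = "ext_seq p i j x0 ?x1"
  have r: "j - 1 + int (length (p j # ?x1)) = s" and r0: "j + int (length ?x1) = s"
    using assms by simp_all
  have e: "ext_seq p i (j-1) x0 (p j # ?x1) = ?q"
    using ext_B assms(3) by (intro ext) simp
  have c: "is_config (i - int (length x0)) s ?q" and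
    b': "\<forall>l\<in>{i..j-1}. bc (?q ` {i - int (length x0)..s}) (p l) = bc (p ` {r..s}) (p l)"
    using assms(5) unfolding Wset_iff r e by auto
  have qp: "\<And>l. i \<le> l \<Longrightarrow> l \<le> s \<Longrightarrow> ?q l = p l" using ext_suffix assms by simp
  have bi: "bc (?q ` {i - int (length x0)..s}) (p j) = bc (p ` {r..s}) (p j)"
  proof (rule bc_local[OF assms(1) c])
    fix m :: int assume "\<bar>m - j\<bar> = 1"
    thus "(m \<in> {r..s}) = (m \<in> {i - int (length x0)..s}) \<and> (m \<in> {r..s} \<longrightarrow> ?q m = p m)"
      using qp assms by auto
  qed (use assms qp in auto)
  have "\<forall>l\<in>{i..j}. bc (?q ` {i - int (length x0)..s}) (p l) = bc (p ` {r..s}) (p l)"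
  proof
    fix l assume "l \<in> {i..j}"
    thus "bc (?q ` {i - int (length x0)..s}) (p l) = bc (p ` {r..s}) (p l)"
      using bi b' by (cases "l = j") auto
  qed
  thus ?thesis unfolding Wset_iff r0 using c by auto
qed

theorem lemma6:
  fixes r s :: int and p :: "int \<Rightarrow> pos"
  assumes "is_config r s p"
    and "CNI r s p"
  shows "(\<forall>i j. (i,j) \<in> Kset r s p \<and> i + 1 \<le> 0 \<longrightarrow> Vset r s p i j = Vset r s p (i + 1) j)
       \<and> (\<forall>i j. (i,j) \<in> Kset r s p \<and> 0 \<le> j - 1 \<longrightarrow> Uset r s p i j = Uset r s p i (j - 1))"
proof (intro conjI allI impI)
  fix i j assume h: "(i,j) \<in> Kset r s p \<and> i + 1 \<le> 0"
  hence b: "r \<le> i" "i + 1 \<le> 0" "0 \<le> j" "j \<le> s" and fin: "finite (Wset r s p i j)"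
    unfolding Kset_def by auto
  have ni: "NI r s p (i+1) j"
  proof (cases "finite (Wset r s p (i+1) j)")
    case True
    hence "(i+1,j) \<in> Kset r s p" using b unfolding Kset_def by auto
    thus ?thesis using assms(2) unfolding CNI_def by auto
  next
    case False
    hence "(i+1,j) \<in> Iset r s p" using b fin unfolding Iset_def by auto
    thus ?thesis using assms(2) unfolding CNI_def by auto
  qed
  show "Vset r s p i j = Vset r s p (i + 1) j"
  proof
    show "Vset r s p i j \<subseteq> Vset r s p (i + 1) j"
      unfolding Vset_def using lemA b by (force intro: image_eqI)
  next
    show "Vset r s p (i + 1) j \<subseteq> Vset r s p i j"
    proof
      fix y1 assume "y1 \<in> Vset r s p (i + 1) j"
      moreover have "(map p [r..i-1] @ [p i], map p [j+1..s]) \<in> Wset r s p (i+1) j"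
        using lemA[OF lemC[OF assms(1) b(1) _ b(4)]] b by auto
      hence "map p [r..i-1] @ [p i] \<in> Uset r s p (i+1) j" unfolding Uset_def by force
      ultimately have "(map p [r..i-1] @ [p i], y1) \<in> Wset r s p (i+1) j"
        using ni unfolding NI_def Vset_def by auto
      hence "(map p [r..i-1], y1) \<in> Wset r s p i j" using lemD[OF assms(1) b(1)] b by auto
      thus "y1 \<in> Vset r s p i j" unfolding Vset_def by force
    qed
  qed
next
  fix i j assume h: "(i,j) \<in> Kset r s p \<and> 0 \<le> j - 1"
  hence b: "r \<le> i" "i \<le> 0" "0 \<le> j - 1" "j \<le> s" and fin: "finite (Wset r s p i j)"
    unfolding Kset_def by auto
  have ni: "NI r s p i (j-1)"
  proof (cases "finite (Wset r s p i (j-1))")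
    case True
    hence "(i,j-1) \<in> Kset r s p" using b unfolding Kset_def by auto
    thus ?thesis using assms(2) unfolding CNI_def by auto
  next
    case False
    hence "(i,j-1) \<in> Jset r s p" using b fin unfolding Jset_def by auto
    thus ?thesis using assms(2) unfolding CNI_def by auto
  qed
  show "Uset r s p i j = Uset r s p i (j - 1)"
  proof
    show "Uset r s p i j \<subseteq> Uset r s p i (j - 1)"
      unfolding Uset_def using lemB b by (force intro: image_eqI)
  next
    show "Uset r s p i (j - 1) \<subseteq> Uset r s p i j"
    proof
      fix x0 assume "x0 \<in> Uset r s p i (j - 1)"
      moreover have "(map p [r..i-1], p j # map p [j+1..s]) \<in> Wset r s p i (j-1)"
        using lemB[OF lemC[OF assms(1) b(1) _ b(4)]] b by auto
      hence "p j # map p [j+1..s] \<in> Vset r s p i (j-1)" unfolding Vset_def by force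
      ultimately have "(x0, p j # map p [j+1..s]) \<in> Wset r s p i (j-1)"
        using ni unfolding NI_def Uset_def by auto
      hence "(x0, map p [j+1..s]) \<in> Wset r s p i j" using lemD'[OF assms(1) b(1)] b by auto
      thus "x0 \<in> Uset r s p i j" unfolding Uset_def by force
    qed
  qed
qed

end
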